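(* Let $n$ be a positive integer and $p$ an odd prime. Let $S \subseteq \mathbb{Z}_n$ with $0\notin S$, $S=-S$, $|S| = p$, such that the circulant graph $\mathrm{Cay}(\mathbb{Z}_n,S)$ is connected. Then $\mathrm{Cay}(\mathbb{Z}_n,S)$ admits a total perfect code if and only if $p$ divides $n$ and $s \not\equiv s' \pmod p$ for all distinct $s,s'\in S$.
   Context: $\mathbb{Z}_n$ is the additive group of integers modulo $n$; elements are identified with integers in $\{0,1,\dots,n-1\}$ when reducing modulo $p$. For an inverse-closed subset $S$ of $\mathbb{Z}_n$ not containing $0$, the circulant graph $\mathrm{Cay}(\mathbb{Z}_n,S)$ has vertex set $\mathbb{Z}_n$, with $u,v$ adjacent iff $v-u\in S$; its degree is $|S|$. A total perfect code in a graph $\Gamma=(V,E)$ is a subset $C\subseteq V$ such that every vertex of $V$ has exactly one neighbour in $C$. *)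

theory Defs
  imports Main "HOL-Computational_Algebra.Primes"
begin

text \<open>Z_n is modelled by the integers {0..<n}; S is a subset of {0..<n}.\<close>

definition circ_adj :: "int \<Rightarrow> int set \<Rightarrow> int \<Rightarrow> int \<Rightarrow> bool" where
  "circ_adj n S u v \<longleftrightarrow> u \<in> {0..<n} \<and> v \<in> {0..<n} \<and> (v - u) mod n \<in> S"

definition connection_set :: "int \<Rightarrow> int set \<Rightarrow> bool" where
  "connection_set n S \<longleftrightarrow> S \<subseteq> {0..<n} \<and> 0 \<notin> S \<and> (\<forall>s\<in>S. (- s) mod n \<in> S)"

definition circulant_connected :: "int \<Rightarrow> int set \<Rightarrow> bool" where
  "circulant_connected n S \<longleftrightarrow>
     (\<forall>u\<in>{0..<n}. \<forall>v\<in>{0..<n}. (circ_adj n S)\<^sup>*\<^sup>* u v)"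

definition total_perfect_code :: "int \<Rightarrow> int set \<Rightarrow> int set \<Rightarrow> bool" where
  "total_perfect_code n S C \<longleftrightarrow> C \<subseteq> {0..<n} \<and>
     (\<forall>v\<in>{0..<n}. card {c \<in> C. circ_adj n S v c} = 1)"

end

theory Submission
  imports Defs "HOL-Computational_Algebra.Polynomial"
begin


lemma frob2:
  fixes x y :: "'a::comm_ring_1"
  assumes "prime (P::nat)"
  shows "\<exists>h. (x + y)^P = x^P + y^P + of_nat P * h"
proof -
  have P1: "P > 1" using assms prime_gt_1_nat by blast
  have dv: "\<And>k. k \<in> {1..<P} \<Longrightarrow> P dvd (P choose k)"
    using dvd_choose_prime assms P1 by auto
  have split: "{..P} = insert 0 (insert P {1..<P})" using P1 by auto
  define h where "h = (\<Sum>k\<in>{1..<P}. of_nat ((P choose k) div P) * x^k * y^(P-k))"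
  have "(x+y)^P = (\<Sum>k\<le>P. of_nat (P choose k) * x^k * y^(P-k))"
    by (rule binomial_ring)
  also have "\<dots> = y^P + (x^P + (\<Sum>k\<in>{1..<P}. of_nat (P choose k) * x^k * y^(P-k)))"
    unfolding split using P1 by (simp add: sum.insert)
  also have "(\<Sum>k\<in>{1..<P}. of_nat (P choose k) * x^k * y^(P-k)) = of_nat P * h"
    unfolding h_def sum_distrib_left
  proof (rule sum.cong)
    fix k assume k: "k \<in> {1..<P}"
    have "P choose k = P * ((P choose k) div P)" using dv[OF k] by simp
    hence "(of_nat (P choose k) :: 'a) = of_nat P * of_nat ((P choose k) div P)"
      by (metis of_nat_mult)
    thus "of_nat (P choose k) * x^k * y^(P-k) = of_nat P * (of_nat ((P choose k) div P) * x^k * y^(P-k))"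
      by (simp add: mult.assoc)
  qed simp
  finally show ?thesis by (auto simp: algebra_simps)
qed

definition PS :: "int set \<Rightarrow> int poly" where "PS A = (\<Sum>a\<in>A. monom 1 (nat a))"
definition PSp :: "nat \<Rightarrow> int set \<Rightarrow> int poly" where "PSp P A = (\<Sum>a\<in>A. monom 1 (P * nat a))"

lemma frob:
  assumes "prime (P::nat)" and "finite A"
  shows "\<exists>h. (PS A)^P = PSp P A + of_nat P * h"
  using assms(2)
proof (induction A rule: finite_induct)
  case empty
  have "P > 0" using assms(1) prime_gt_0_nat by blast
  thus ?case by (auto simp: PS_def PSp_def zero_power)
next
  case (insert a A)
  then obtain h where h: "(PS A)^P = PSp P A + of_nat P * h" by blast
  obtain h1 where h1: "(monom 1 (nat a) + PS A)^P = (monom 1 (nat a))^P + (PS A)^P + of_nat P * h1"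
    using frob2[OF assms(1)] by blast
  have "PS (insert a A) = monom 1 (nat a) + PS A" using insert by (simp add: PS_def)
  moreover have "PSp P (insert a A) = monom 1 (P * nat a) + PSp P A" using insert by (simp add: PSp_def)
  moreover have "(monom (1::int) (nat a))^P = monom 1 (P * nat a)" by (simp add: monom_power mult.commute)
  ultimately have "(PS (insert a A))^P = PSp P (insert a A) + of_nat P * (h + h1)"
    using h h1 by (simp add: algebra_simps)
  thus ?case by blast
qed



definition fld :: "int \<Rightarrow> int poly \<Rightarrow> int \<Rightarrow> int" where
  "fld n f z = (\<Sum>i\<le>degree f. if int i mod n = z then coeff f i else 0)"

lemma fld_bound:
  assumes "degree f \<le> K"
  shows "fld n f z = (\<Sum>i\<le>K. if int i mod n = z then coeff f i else 0)"
  unfolding fld_def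
  by (rule sum.mono_neutral_left) (use assms in \<open>auto simp: coeff_eq_0 not_le\<close>)

lemma fld_add: "fld n (f + g) z = fld n f z + fld n g z"
proof -
  define K where "K = max (degree f) (degree g)"
  have "degree (f+g) \<le> K" unfolding K_def by (rule degree_add_le) auto
  thus ?thesis
    by (simp add: fld_bound[of "f+g" K] fld_bound[of f K] fld_bound[of g K] K_def sum.distrib[symmetric]
        if_distrib) (rule sum.cong, auto)
qed


lemma fld_smult: "fld n (smult a f) z = a * fld n f z"
proof -
  have "fld n (smult a f) z = (\<Sum>i\<le>degree f. if int i mod n = z then coeff (smult a f) i else 0)"
    by (rule fld_bound[OF degree_smult_le])
  also have "\<dots> = a * fld n f z" unfolding fld_def sum_distrib_left
    by (rule sum.cong) auto
  finally show ?thesis .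
qed

lemma fld_monom: "fld n (monom c k) z = (if int k mod n = z then c else 0)"
proof -
  have "fld n (monom c k) z = (\<Sum>i\<le>k. if int i mod n = z then coeff (monom c k) i else 0)"
    by (rule fld_bound) (simp add: degree_monom_le)
  also have "\<dots> = (\<Sum>i\<le>k. if i = k then (if int k mod n = z then c else 0) else 0)"
    by (rule sum.cong) (auto simp: coeff_monom)
  also have "\<dots> = (if int k mod n = z then c else 0)" by simp
  finally show ?thesis .
qed

lemma fld_zero: "fld n 0 z = 0" using fld_monom[of n 0 0 z] by simp

lemma fld_sum: "finite I \<Longrightarrow> fld n (\<Sum>i\<in>I. f i) z = (\<Sum>i\<in>I. fld n (f i) z)"
  by (induction I rule: finite_induct) (auto simp: fld_zero fld_add)

lemma fld_ofnat: "fld n (of_nat P * h) z = int P * fld n h z"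
proof -
  have "(of_nat P :: int poly) * h = smult (int P) h" by (simp add: of_nat_poly)
  thus ?thesis by (simp add: fld_smult)
qed

lemma fld_mult:
  assumes "n > 0" "0 \<le> z" "z < n"
  shows "fld n (f * g) z = (\<Sum>i\<le>degree f. coeff f i * fld n g ((z - int i) mod n))"
proof -
  have "f * g = (\<Sum>i\<le>degree f. monom (coeff f i) i) * (\<Sum>j\<le>degree g. monom (coeff g j) j)"
    by (simp add: poly_as_sum_of_monoms)
  also have "\<dots> = (\<Sum>i\<le>degree f. \<Sum>j\<le>degree g. monom (coeff f i * coeff g j) (i + j))"
    by (simp add: sum_product mult_monom)
  finally have "fld n (f*g) z = (\<Sum>i\<le>degree f. \<Sum>j\<le>degree g. if int (i+j) mod n = z then coeff f i * coeff g j else 0)"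
    by (simp add: fld_sum fld_monom)
  also have "\<dots> = (\<Sum>i\<le>degree f. coeff f i * fld n g ((z - int i) mod n))"
    unfolding fld_def sum_distrib_left
  proof (intro sum.cong refl)
    fix i j
    have "(int (i+j) mod n = z) = (int j mod n = (z - int i) mod n)"
    proof -
      have zz: "z = z mod n" using assms by simp
      have "(int (i+j) mod n = z) = (int (i+j) mod n = z mod n)" using zz by simp
      also have "\<dots> = (n dvd (int (i+j) - z))" by (rule mod_eq_dvd_iff)
      also have "\<dots> = (n dvd (int j - (z - int i)))" by (simp add: algebra_simps)
      also have "\<dots> = (int j mod n = (z - int i) mod n)" by (rule mod_eq_dvd_iff[symmetric])
      finally show ?thesis .
    qed
    thus "(if int (i + j) mod n = z then coeff f i * coeff g j else 0) =
          coeff f i * (if int j mod n = (z - int i) mod n then coeff g j else 0)" by simp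
  qed
  finally show ?thesis .
qed

lemma fld_mult_const:
  assumes "n > 0" "0 \<le> z" "z < n" and g1: "\<And>w. 0 \<le> w \<Longrightarrow> w < n \<Longrightarrow> fld n g w = 1"
  shows "fld n (f * g) z = poly f 1"
proof -
  have "fld n (f * g) z = (\<Sum>i\<le>degree f. coeff f i * fld n g ((z - int i) mod n))"
    by (rule fld_mult[OF assms(1-3)])
  also have "\<dots> = (\<Sum>i\<le>degree f. coeff f i)"
    by (rule sum.cong) (use g1 assms(1) in auto)
  also have "\<dots> = poly f 1" by (simp add: poly_altdef)
  finally show ?thesis .
qed

lemma poly_PS: "finite A \<Longrightarrow> poly (PS A) 1 = int (card A)"
  by (simp add: PS_def poly_sum poly_monom)



lemma card_as_sum: "finite A \<Longrightarrow> card {x\<in>A. Q x} = (\<Sum>x\<in>A. if Q x then 1 else (0::nat))"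
  by (simp add: sum.If_cases Int_def)

lemma backward:
  fixes n p :: int and S :: "int set"
  assumes n: "n > 0" and pp: "prime p"
    and cs: "connection_set n S" and cardS: "card S = nat p"
    and dv: "p dvd n" and inj: "\<forall>s\<in>S. \<forall>s'\<in>S. s \<noteq> s' \<longrightarrow> s mod p \<noteq> s' mod p"
  shows "total_perfect_code n S {c\<in>{0..<n}. p dvd c}"
proof -
  have p0: "p > 0" using pp prime_gt_0_int by blast
  have Ssub: "S \<subseteq> {0..<n}" using cs by (simp add: connection_set_def)
  have finS: "finite S" using Ssub finite_subset by blast
  have injS: "inj_on (\<lambda>s. s mod p) S" using inj unfolding inj_on_def by blast
  have img: "(\<lambda>s. s mod p) ` S = {0..<p}"
  proof (rule card_subset_eq)
    show "finite {0..<p}" by simp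
    show "(\<lambda>s. s mod p) ` S \<subseteq> {0..<p}" using p0 by auto
    show "card ((\<lambda>s. s mod p) ` S) = card {0..<p}" using card_image[OF injS] cardS by simp
  qed
  show ?thesis unfolding total_perfect_code_def
  proof (intro conjI ballI)
    show "{c \<in> {0..<n}. p dvd c} \<subseteq> {0..<n}" by blast
    fix v assume v: "v \<in> {0..<n}"
    have "(-v) mod p \<in> {0..<p}" using p0 by simp
    hence "(-v) mod p \<in> (\<lambda>s. s mod p) ` S" using img by simp
    then obtain s0 where s0: "s0 \<in> S" "s0 mod p = (-v) mod p" by (metis imageE)
    have "{c \<in> {c \<in> {0..<n}. p dvd c}. circ_adj n S v c} = {(v + s0) mod n}"
    proof (intro equalityI subsetI)
      fix c assume c: "c \<in> {c \<in> {c \<in> {0..<n}. p dvd c}. circ_adj n S v c}"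
      hence c1: "0 \<le> c" "c < n" "p dvd c" and cs1: "(c - v) mod n \<in> S" by (auto simp: circ_adj_def)
      have "((c - v) mod n) mod p = (c - v) mod p" using dv by (simp add: mod_mod_cancel)
      also have "\<dots> = (-v) mod p" using c1(3)
        by (metis diff_conv_add_uminus dvd_imp_mod_0 mod_add_left_eq add.left_neutral)
      finally have "(c - v) mod n = s0" using inj s0 cs1 by metis
      hence "(v + s0) mod n = (v + (c - v) mod n) mod n" by simp
      also have "\<dots> = c" using c1 by (simp add: mod_add_right_eq)
      finally show "c \<in> {(v + s0) mod n}" by simp
    next
      fix c assume "c \<in> {(v + s0) mod n}"
      hence c: "c = (v + s0) mod n" by simp
      have "c mod p = (v + s0) mod p" using c dv by (simp add: mod_mod_cancel)
      also have "\<dots> = (v + s0 mod p) mod p" by (simp add: mod_add_right_eq)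
      also have "\<dots> = (v + (-v) mod p) mod p" using s0 by simp
      also have "\<dots> = (v + (-v)) mod p" by (rule mod_add_right_eq)
      also have "\<dots> = 0" by simp
      finally have "p dvd c" by presburger
      moreover have "(c - v) mod n = s0" using c Ssub s0 
        by (auto simp: mod_diff_left_eq)
      ultimately show "c \<in> {c \<in> {c \<in> {0..<n}. p dvd c}. circ_adj n S v c}"
        using c n v s0 by (auto simp: circ_adj_def)
    qed
    thus "card {c \<in> {c \<in> {0..<n}. p dvd c}. circ_adj n S v c} = 1" by simp
  qed
qed



lemma mod_cond:
  fixes n z k c :: int
  assumes "n > 0" "0 \<le> z" "z < n" "0 \<le> c" "c < n"
  shows "((k + c) mod n = z) = (c = (z - k) mod n)"
proof -
  have "((k + c) mod n = z) = ((k + c) mod n = z mod n)" using assms by simp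
  also have "\<dots> = (n dvd (k + c - z))" by (rule mod_eq_dvd_iff)
  also have "\<dots> = (n dvd (c - (z - k)))" by (simp add: algebra_simps)
  also have "\<dots> = (c mod n = (z - k) mod n)" by (rule mod_eq_dvd_iff[symmetric])
  also have "\<dots> = (c = (z - k) mod n)" using assms by simp
  finally show ?thesis .
qed

lemma sum_delta_mod:
  fixes n z k :: int
  assumes "n > 0" "0 \<le> z" "z < n" "C \<subseteq> {0..<n}" "finite C"
  shows "(\<Sum>c\<in>C. if (k + c) mod n = z then 1 else (0::int)) = (if (z - k) mod n \<in> C then 1 else 0)"
proof -
  have "(\<Sum>c\<in>C. if (k + c) mod n = z then 1 else (0::int)) = (\<Sum>c\<in>C. if c = (z - k) mod n then 1 else 0)"
  proof (rule sum.cong)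
    fix c assume "c \<in> C"
    hence "0 \<le> c" "c < n" using assms(4) by auto
    thus "(if (k + c) mod n = z then 1 else (0::int)) = (if c = (z - k) mod n then 1 else 0)"
      using mod_cond[OF assms(1-3)] by simp
  qed simp
  also have "\<dots> = (if (z - k) mod n \<in> C then 1 else 0)" using assms(5) by (simp add: sum.delta')
  finally show ?thesis .
qed

lemma fld_prod:
  fixes n z :: int
  assumes n: "n > 0" "0 \<le> z" "z < n" and S: "S \<subseteq> {0..<n}" and C: "C \<subseteq> {0..<n}"
  shows "fld n (PSp k S * PS C) z = int (card {s\<in>S. (z - int k * s) mod n \<in> C})"
proof -
  have finS: "finite S" using S finite_subset by blast
  have finC: "finite C" using C finite_subset by blast
  have "PSp k S * PS C = (\<Sum>s\<in>S. \<Sum>c\<in>C. monom 1 (k * nat s + nat c))"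
    by (simp add: PSp_def PS_def sum_product mult_monom)
  hence "fld n (PSp k S * PS C) z = (\<Sum>s\<in>S. \<Sum>c\<in>C. if int (k * nat s + nat c) mod n = z then 1 else 0)"
    by (simp add: fld_sum finS finC fld_monom)
  also have "\<dots> = (\<Sum>s\<in>S. \<Sum>c\<in>C. if (int k * s + c) mod n = z then 1 else 0)"
  proof (intro sum.cong refl)
    fix s c assume "s \<in> S" "c \<in> C"
    hence "int (k * nat s + nat c) = int k * s + c" using S C by auto
    thus "(if int (k * nat s + nat c) mod n = z then 1 else 0) = (if (int k * s + c) mod n = z then 1 else (0::int))"
      by simp
  qed
  also have "\<dots> = (\<Sum>s\<in>S. if (z - int k * s) mod n \<in> C then 1 else 0)"
    by (rule sum.cong) (use sum_delta_mod[OF n C finC] in auto)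
  also have "\<dots> = int (card {s\<in>S. (z - int k * s) mod n \<in> C})"
    using finS by (simp add: sum.If_cases Int_def)
  finally show ?thesis .
qed



lemma forward:
  fixes n p :: int and S C :: "int set"
  assumes n: "n > 0" and pp: "prime p" and odd: "odd p"
    and cs: "connection_set n S"
    and cardS: "card S = nat p"
    and conn: "circulant_connected n S"
    and tpc: "total_perfect_code n S C"
  shows "p dvd n \<and> (\<forall>s\<in>S. \<forall>s'\<in>S. s \<noteq> s' \<longrightarrow> s mod p \<noteq> s' mod p)"
proof -
  define P where "P = nat p"
  have p2: "p \<ge> 2" using pp prime_ge_2_int by blast
  have pP: "p = int P" using p2 unfolding P_def by simp
  have primeP: "prime P" using pp pP by simp
  have P2: "P \<ge> 2" using p2 pP by simp
  have Ssub: "S \<subseteq> {0..<n}" using cs by (simp add: connection_set_def)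
  have finS: "finite S" using Ssub finite_subset by blast
  have neg: "\<And>s. s \<in> S \<Longrightarrow> (-s) mod n \<in> S" using cs by (simp add: connection_set_def)
  have Csub: "C \<subseteq> {0..<n}" using tpc by (simp add: total_perfect_code_def)
  have finC: "finite C" using Csub finite_subset by blast
  have tpc1: "\<And>v. 0 \<le> v \<Longrightarrow> v < n \<Longrightarrow> card {c\<in>C. (c - v) mod n \<in> S} = 1"
  proof -
    fix v assume v: "0 \<le> v" "v < n"
    have "{c\<in>C. circ_adj n S v c} = {c\<in>C. (c - v) mod n \<in> S}"
      using Csub v by (auto simp: circ_adj_def)
    moreover have "card {c\<in>C. circ_adj n S v c} = 1" using tpc v by (simp add: total_perfect_code_def)
    ultimately show "card {c\<in>C. (c - v) mod n \<in> S} = 1" by simp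
  qed
  have tile: "\<And>z. 0 \<le> z \<Longrightarrow> z < n \<Longrightarrow> fld n (PS S * PS C) z = 1"
  proof -
    fix z assume z: "0 \<le> z" "z < n"
    have "PS S = PSp 1 S" by (simp add: PS_def PSp_def)
    hence "fld n (PS S * PS C) z = int (card {s\<in>S. (z - s) mod n \<in> C})"
      using fld_prod[OF n z Ssub Csub, of 1] by simp
    also have "card {s\<in>S. (z - s) mod n \<in> C} = card {c\<in>C. (c - z) mod n \<in> S}"
    proof (rule bij_betw_same_card[of "\<lambda>s. (z - s) mod n"], rule bij_betw_byWitness[of _ "\<lambda>c. (z - c) mod n"])
      show "\<forall>s\<in>{s\<in>S. (z - s) mod n \<in> C}. (z - (z - s) mod n) mod n = s"
        using Ssub by (auto simp: mod_diff_right_eq)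
      show "\<forall>c\<in>{c\<in>C. (c - z) mod n \<in> S}. (z - (z - c) mod n) mod n = c"
        using Csub by (auto simp: mod_diff_right_eq)
      show "(\<lambda>s. (z - s) mod n) ` {s\<in>S. (z - s) mod n \<in> C} \<subseteq> {c\<in>C. (c - z) mod n \<in> S}"
      proof clarify
        fix s assume s: "s \<in> S" "(z - s) mod n \<in> C"
        have "((z - s) mod n - z) mod n = (-s) mod n" by (simp add: mod_diff_left_eq)
        thus "((z - s) mod n - z) mod n \<in> S" using neg s by simp
      qed
      show "(\<lambda>c. (z - c) mod n) ` {c\<in>C. (c - z) mod n \<in> S} \<subseteq> {s\<in>S. (z - s) mod n \<in> C}"
      proof (rule image_subsetI)
        fix c assume "c \<in> {c\<in>C. (c - z) mod n \<in> S}"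
        hence c: "c \<in> C" "(c - z) mod n \<in> S" by auto
        have "(- ((c - z) mod n)) mod n = (z - c) mod n"
          by (metis minus_diff_eq mod_minus_eq)
        hence a: "(z - c) mod n \<in> S" using neg[OF c(2)] by simp
        have "(z - (z - c) mod n) mod n = c" using c Csub by (auto simp: mod_diff_right_eq)
        hence b: "(z - (z - c) mod n) mod n \<in> C" using c by simp
        from a b show "(z - c) mod n \<in> {s\<in>S. (z - s) mod n \<in> C}" by simp
      qed
    qed
    also have "\<dots> = 1" using tpc1 z by simp
    finally show "fld n (PS S * PS C) z = 1" by simp
  qed
  obtain h where h: "(PS S)^P = PSp P S + of_nat P * h" using frob[OF primeP finS] by blast
  have rdvd: "\<And>z. 0 \<le> z \<Longrightarrow> z < n \<Longrightarrow> p dvd int (card {s\<in>S. (z - p * s) mod n \<in> C})"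
  proof -
    fix z assume z: "0 \<le> z" "z < n"
    have e1: "(PS S)^P * PS C = (PS S)^(P-1) * (PS S * PS C)"
    proof -
      obtain m where m: "P = Suc m" using P2 by (cases P) auto
      show ?thesis unfolding m by (simp add: power_Suc2 mult.assoc)
    qed
    have "fld n ((PS S)^P * PS C) z = poly ((PS S)^(P-1)) 1"
      unfolding e1 by (rule fld_mult_const[OF n z tile])
    also have "\<dots> = p^(P-1)" using poly_PS[OF finS] cardS pP by (simp add: poly_power)
    finally have A: "fld n ((PS S)^P * PS C) z = p^(P-1)" .
    have "fld n ((PS S)^P * PS C) z = fld n (PSp P S * PS C) z + int P * fld n (h * PS C) z"
      unfolding h by (simp add: distrib_right fld_add mult.assoc fld_ofnat)
    hence "int (card {s\<in>S. (z - p * s) mod n \<in> C}) = p^(P-1) - p * fld n (h * PS C) z"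
      using A fld_prod[OF n z Ssub Csub, of P] pP by simp
    moreover have "p dvd p^(P-1)" using P2 by (simp add: dvd_power)
    ultimately show "p dvd int (card {s\<in>S. (z - p * s) mod n \<in> C})" by simp
  qed
  have inv: "\<And>c s s'. c \<in> C \<Longrightarrow> s \<in> S \<Longrightarrow> s' \<in> S \<Longrightarrow> (c + p * (s - s')) mod n \<in> C"
  proof -
    fix c s s' assume c: "c \<in> C" and s: "s \<in> S" and s': "s' \<in> S"
    define z where "z = (c + p * s) mod n"
    have z: "0 \<le> z" "z < n" using n unfolding z_def by auto
    define X where "X = {s\<in>S. (z - p * s) mod n \<in> C}"
    have zs: "(z - p * s) mod n = c" using c Csub unfolding z_def by (auto simp: mod_diff_left_eq)
    have "s \<in> X" using zs c s unfolding X_def by simp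
    have XS: "X \<subseteq> S" unfolding X_def by blast
    hence finX: "finite X" using finS finite_subset by blast
    have "card X > 0" using \<open>s \<in> X\<close> finX card_gt_0_iff by blast
    moreover have "card X \<le> card S" using XS finS card_mono by blast
    moreover have "p dvd int (card X)" using rdvd[OF z] unfolding X_def .
    ultimately have "card X = card S"
    proof -
      assume a: "card X > 0" "card X \<le> card S" "p dvd int (card X)"
      obtain k where k: "int (card X) = p * k" using a(3) by blast
      have "0 < p * k" using a(1) k by simp
      hence "k > 0" using p2 zero_less_mult_pos by force
      have "int (card X) \<le> int (nat p)" using a(2) cardS by linarith
      hence "p * k \<le> p * 1" using k p2 by simp
      hence "k \<le> 1" using p2 by simp
      with \<open>k > 0\<close> have "k = 1" by simp
      thus ?thesis using k cardS p2 by simp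
    qed
    hence "X = S" using XS finS card_subset_eq by blast
    hence "(z - p * s') mod n \<in> C" using s' unfolding X_def by blast
    moreover have "(z - p * s') mod n = (c + p * (s - s')) mod n"
      unfolding z_def by (simp add: mod_diff_left_eq algebra_simps)
    ultimately show "(c + p * (s - s')) mod n \<in> C" by simp
  qed
  have cnt: "nat n = card C * nat p"
  proof -
    have "nat n = (\<Sum>z\<in>{0..<n}. (1::nat))" by simp
    also have "\<dots> = (\<Sum>z\<in>{0..<n}. card {c\<in>C. (c - z) mod n \<in> S})"
      by (rule sum.cong) (auto simp: tpc1)
    also have "\<dots> = (\<Sum>z\<in>{0..<n}. \<Sum>c\<in>C. if (c - z) mod n \<in> S then 1 else 0)"
      using finC by (simp add: card_as_sum)
    also have "\<dots> = (\<Sum>c\<in>C. \<Sum>z\<in>{0..<n}. if (c - z) mod n \<in> S then 1 else 0)"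
      by (rule sum.swap)
    also have "\<dots> = (\<Sum>c\<in>C. card {z\<in>{0..<n}. (c - z) mod n \<in> S})"
      by (intro sum.cong refl) (rule card_as_sum[symmetric], simp)
    also have "\<dots> = (\<Sum>c\<in>C. nat p)"
    proof (rule sum.cong[OF refl])
      fix c assume c: "c \<in> C"
      have "card {z\<in>{0..<n}. (c - z) mod n \<in> S} = card S"
      proof (rule bij_betw_same_card[of "\<lambda>z. (c - z) mod n"], rule bij_betw_byWitness[of _ "\<lambda>s. (c - s) mod n"])
        show "\<forall>z\<in>{z\<in>{0..<n}. (c - z) mod n \<in> S}. (c - (c - z) mod n) mod n = z"
          by (auto simp: mod_diff_right_eq)
        show "\<forall>s\<in>S. (c - (c - s) mod n) mod n = s"
          using Ssub by (auto simp: mod_diff_right_eq)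
        show "(\<lambda>z. (c - z) mod n) ` {z\<in>{0..<n}. (c - z) mod n \<in> S} \<subseteq> S" by auto
        show "(\<lambda>s. (c - s) mod n) ` S \<subseteq> {z\<in>{0..<n}. (c - z) mod n \<in> S}"
        proof (rule image_subsetI)
          fix s assume s: "s \<in> S"
          have "(c - (c - s) mod n) mod n = s" using s Ssub by (auto simp: mod_diff_right_eq)
          thus "(c - s) mod n \<in> {z\<in>{0..<n}. (c - z) mod n \<in> S}" using s n by simp
        qed
      qed
      thus "card {z\<in>{0..<n}. (c - z) mod n \<in> S} = nat p" using cardS by simp
    qed
    also have "\<dots> = card C * nat p" by simp
    finally show ?thesis .
  qed
  have pdvd: "p dvd n"
  proof -
    have "int (nat n) = int (card C * nat p)" using cnt by simp
    hence "n = int (card C) * p" using p2 n by simp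
    thus ?thesis by simp
  qed
  define G where "G = {t. \<forall>c\<in>C. (c + p * t) mod n \<in> C}"
  have Gadd: "\<And>a b. a \<in> G \<Longrightarrow> b \<in> G \<Longrightarrow> a + b \<in> G"
  proof -
    fix a b assume a: "a \<in> G" and b: "b \<in> G"
    show "a + b \<in> G" unfolding G_def
    proof (unfold mem_Collect_eq, intro ballI)
      fix c assume c: "c \<in> C"
      have "(c + p * a) mod n \<in> C" using a c unfolding G_def by blast
      hence "((c + p * a) mod n + p * b) mod n \<in> C" using b unfolding G_def by blast
      moreover have "((c + p * a) mod n + p * b) mod n = (c + p * a + p * b) mod n"
        by (rule mod_add_left_eq)
      moreover have "c + p * a + p * b = c + p * (a + b)" by (simp add: algebra_simps)
      ultimately show "(c + p * (a + b)) mod n \<in> C" by simp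
    qed
  qed
  have Gn: "\<And>k. n * k \<in> G"
  proof -
    fix k
    show "n * k \<in> G" unfolding G_def
    proof (unfold mem_Collect_eq, intro ballI)
      fix c assume c: "c \<in> C"
      have eq: "c + p * (n * k) = c + (p * k) * n" by (simp add: algebra_simps)
      have "(c + p * (n * k)) mod n = c mod n" unfolding eq by (rule mod_mult_self1)
      also have "\<dots> = c" using c Csub by auto
      finally show "(c + p * (n * k)) mod n \<in> C" using c by simp
    qed
  qed
  have Gnat: "\<And>t m. t \<in> G \<Longrightarrow> int m * t \<in> G"
  proof -
    fix t m assume t: "t \<in> G"
    show "int m * t \<in> G"
    proof (induction m)
      case 0
      then show ?case using Gn[of 0] by simp
    next
      case (Suc m)
      have "int (Suc m) * t = int m * t + t" by (simp add: algebra_simps)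
      thus ?case using Gadd[OF Suc t] by simp
    qed
  qed
  have Gint: "\<And>t k. t \<in> G \<Longrightarrow> k * t \<in> G"
  proof -
    fix t k assume t: "t \<in> G"
    show "k * t \<in> G"
    proof (cases "k \<ge> 0")
      case True
      then show ?thesis using Gnat[OF t, of "nat k"] by simp
    next
      case False
      have nn: "- k * (n - 1) \<ge> 0" using False n by (simp add: mult_nonpos_nonneg)
      have i: "int (nat (- k * (n - 1))) = - k * (n - 1)" using nn by simp
      have eq: "int (nat (- k * (n - 1))) * t + n * (k * t) = k * t"
        unfolding i by (simp add: algebra_simps)
      have "int (nat (- k * (n - 1))) * t + n * (k * t) \<in> G" by (rule Gadd[OF Gnat[OF t] Gn])
      thus ?thesis unfolding eq .
    qed
  qed
  have Gdiff: "\<And>s s'. s \<in> S \<Longrightarrow> s' \<in> S \<Longrightarrow> s - s' \<in> G"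
    unfolding G_def using inv by blast
  have "S \<noteq> {}" using cardS p2 by auto
  then obtain s0 where s0: "s0 \<in> S" by blast
  have G2s0: "2 * s0 \<in> G"
  proof -
    define s1 where "s1 = (- s0) mod n"
    define q where "q = (- s0) div n"
    have s1: "s1 \<in> S" using neg[OF s0] unfolding s1_def .
    have "- s0 = q * n + s1" unfolding q_def s1_def by simp
    hence eq: "(s0 - s1) + n * (- q) = 2 * s0" by (simp add: algebra_simps)
    have "(s0 - s1) + n * (- q) \<in> G" by (rule Gadd[OF Gdiff[OF s0 s1] Gn])
    thus ?thesis unfolding eq .
  qed
  have reach: "\<And>v. (circ_adj n S)\<^sup>*\<^sup>* 0 v \<Longrightarrow> \<exists>L. v - L * s0 \<in> G"
  proof -
    fix v assume "(circ_adj n S)\<^sup>*\<^sup>* 0 v"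
    thus "\<exists>L. v - L * s0 \<in> G"
    proof (induction rule: rtranclp_induct)
      case base
      show ?case using Gn[of 0] by (intro exI[of _ 0]) simp
    next
      case (step y z)
      then obtain L where L: "y - L * s0 \<in> G" by blast
      define s where "s = (z - y) mod n"
      have s: "s \<in> S" using step(2) unfolding s_def circ_adj_def by blast
      have "z - y = (z - y) div n * n + s" unfolding s_def by simp
      hence eq: "(y - L * s0) + (s - s0) + n * ((z - y) div n) = z - (L + 1) * s0"
        by (simp add: algebra_simps)
      have "(y - L * s0) + (s - s0) + n * ((z - y) div n) \<in> G"
        by (rule Gadd[OF Gadd[OF L Gdiff[OF s s0]] Gn])
      hence "z - (L + 1) * s0 \<in> G" unfolding eq .
      thus ?case by blast
    qed
  qed
  have n1: "1 < n"
  proof -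
    have "card S \<le> card {0..<n}" using Ssub by (intro card_mono) auto
    thus ?thesis using cardS p2 by simp
  qed
  have "(circ_adj n S)\<^sup>*\<^sup>* 0 1" using conn n n1 unfolding circulant_connected_def by simp
  then obtain L where L: "1 - L * s0 \<in> G" using reach by blast
  have e2: "2 * (1 - L * s0) + L * (2 * s0) = 2" by (simp add: algebra_simps)
  have "2 * (1 - L * s0) + L * (2 * s0) \<in> G" by (rule Gadd[OF Gint[OF L] Gint[OF G2s0]])
  hence G2: "2 \<in> G" unfolding e2 .
  have distinct: "\<forall>s\<in>S. \<forall>s'\<in>S. s \<noteq> s' \<longrightarrow> s mod p \<noteq> s' mod p"
  proof (intro ballI impI notI)
    fix s s' assume s: "s \<in> S" and s': "s' \<in> S" and ne: "s \<noteq> s'" and eq: "s mod p = s' mod p"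
    have "p dvd (s - s')" using eq by (simp add: mod_eq_dvd_iff)
    then obtain e where e: "s - s' = p * e" by blast
    define m where "m = (p - 1) div 2"
    have pm: "p = 2 * m + 1" using odd unfolding m_def by simp
    have ee: "(s - s') + (- ((p - 1) div 2) * e) * 2 = e"
      unfolding e m_def[symmetric] pm by (simp add: algebra_simps)
    have "(s - s') + (- ((p - 1) div 2) * e) * 2 \<in> G" by (rule Gadd[OF Gdiff[OF s s'] Gint[OF G2]])
    hence eG: "e \<in> G" unfolding ee .
    have "card {c\<in>C. (c - 0) mod n \<in> S} = 1" using tpc1[of 0] n by blast
    hence "{c\<in>C. (c - 0) mod n \<in> S} \<noteq> {}" by (metis card.empty zero_neq_one)
    then obtain c where c: "c \<in> C" by blast
    define c' where "c' = (c + p * e) mod n"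
    have c': "c' \<in> C" using eG c unfolding G_def c'_def by blast
    have c'e: "c' = (c + (s - s')) mod n" unfolding c'_def e ..
    define v where "v = (c - s') mod n"
    have v: "0 \<le> v" "v < n" using n unfolding v_def by auto
    have cv: "(c - v) mod n = s'" unfolding v_def using s' Ssub by (auto simp: mod_diff_right_eq)
    have "(c' - v) mod n = (c + (s - s') - (c - s')) mod n" unfolding c'e v_def by (rule mod_diff_eq)
    also have "\<dots> = s" using s Ssub by auto
    finally have c'v: "(c' - v) mod n = s" .
    have "c \<noteq> c'" using cv c'v ne by auto
    have sub: "{c, c'} \<subseteq> {x\<in>C. (x - v) mod n \<in> S}" using c c' cv c'v s s' by auto
    have "card {c, c'} \<le> card {x\<in>C. (x - v) mod n \<in> S}"
      by (rule card_mono) (use finC sub in auto)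
    also have "\<dots> = 1" using tpc1 v by simp
    finally show False using \<open>c \<noteq> c'\<close> by simp
  qed
  show ?thesis using pdvd distinct by blast
qed


theorem theorem1p3:
  fixes n p :: int and S :: "int set"
  assumes "n > 0" and "prime p" and "odd p"
    and "connection_set n S"
    and "card S = nat p"
    and "circulant_connected n S"
  shows "(\<exists>C. total_perfect_code n S C) \<longleftrightarrow>
         (p dvd n \<and> (\<forall>s\<in>S. \<forall>s'\<in>S. s \<noteq> s' \<longrightarrow> s mod p \<noteq> s' mod p))"
proof
  assume "\<exists>C. total_perfect_code n S C"
  then obtain C where "total_perfect_code n S C" by blast
  thus "p dvd n \<and> (\<forall>s\<in>S. \<forall>s'\<in>S. s \<noteq> s' \<longrightarrow> s mod p \<noteq> s' mod p)"
    using forward assms by blast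
next
  assume "p dvd n \<and> (\<forall>s\<in>S. \<forall>s'\<in>S. s \<noteq> s' \<longrightarrow> s mod p \<noteq> s' mod p)"
  thus "\<exists>C. total_perfect_code n S C" using backward assms by blast
qed

end
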